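(* Let $n\in\mathbb{N}$ and $0<\beta\le n$. Then there exists a constant $C_\beta>0$ depending only on $\beta$ such that for all functions $f,g$ on $\mathbb{R}^n$: (i) $\|f+g\|_{\operatorname{BMO}^\beta(\mathbb{R}^n)}\le2(\|f\|_{\operatorname{BMO}^\beta(\mathbb{R}^n)}+\|g\|_{\operatorname{BMO}^\beta(\mathbb{R}^n)})$; (ii) $\|\lambda f\|_{\operatorname{BMO}^\beta(\mathbb{R}^n)}=|\lambda|\|f\|_{\operatorname{BMO}^\beta(\mathbb{R}^n)}$ for every $\lambda\in\mathbb{R}$; (iii) $\||f|\|_{\operatorname{BMO}^\beta(\mathbb{R}^n)}\le C_\beta\|f\|_{\operatorname{BMO}^\beta(\mathbb{R}^n)}$; (iv) $\|\max(f,g)\|_{\operatorname{BMO}^\beta(\mathbb{R}^n)}\le C_\beta(\|f\|_{\operatorname{BMO}^\beta(\mathbb{R}^n)}+\|g\|_{\operatorname{BMO}^\beta(\mathbb{R}^n)})$; (v) $\|\min(f,g)\|_{\operatorname{BMO}^\beta(\mathbb{R}^n)}\le C_\beta(\|f\|_{\operatorname{BMO}^\beta(\mathbb{R}^n)}+\|g\|_{\operatorname{BMO}^\beta(\mathbb{R}^n)})$.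
   Context: $\mathcal{H}^\beta_\infty(E)=\inf\{\sum_i\omega_\beta r_i^\beta:E\subset\bigcup_iB(x_i,r_i)\}$, $\omega_\beta=\pi^{\beta/2}/\Gamma(\beta/2+1)$; integrals against $\mathcal{H}^\beta_\infty$ are Choquet integrals $\int_\Omega h\,d\mathcal{H}^\beta_\infty=\int_0^\infty\mathcal{H}^\beta_\infty(\{x\in\Omega:h>t\})\,dt$. Cubes are axis-parallel with side length $\ell(Q)$. $\|f\|_{\operatorname{BMO}^\beta(\mathbb{R}^n)}=\sup_Q\inf_{c\in\mathbb{R}}\ell(Q)^{-\beta}\int_Q|f-c|\,d\mathcal{H}^\beta_\infty$. *)

theory Defs
  imports "HOL-Analysis.Analysis"
begin

text \<open>Points of R^n are represented as functions nat => real vanishing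
  outside {..<n}, so that the dimension n is an ordinary natural-number
  parameter (needed because the constant must not depend on n).\<close>

definition Rn :: "nat \<Rightarrow> (nat \<Rightarrow> real) set" where
  "Rn n = {x. \<forall>i\<ge>n. x i = 0}"

definition edist :: "nat \<Rightarrow> (nat \<Rightarrow> real) \<Rightarrow> (nat \<Rightarrow> real) \<Rightarrow> real" where
  "edist n x y = sqrt (\<Sum>i<n. (x i - y i)^2)"

definition ballN :: "nat \<Rightarrow> (nat \<Rightarrow> real) \<Rightarrow> real \<Rightarrow> (nat \<Rightarrow> real) set" where
  "ballN n x r = {y \<in> Rn n. edist n x y < r}"

definition omega :: "real \<Rightarrow> real" where
  "omega \<beta> = pi powr (\<beta> / 2) / Gamma (\<beta> / 2 + 1)"

definition hcontent :: "nat \<Rightarrow> real \<Rightarrow> (nat \<Rightarrow> real) set \<Rightarrow> ennreal" where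
  "hcontent n \<beta> E = (INF p \<in> {(c, r). (\<forall>i. c i \<in> Rn n \<and> 0 \<le> r i) \<and>
        E \<subseteq> (\<Union>i. ballN n (c i) (r i))}.
      (\<Sum>i. ennreal (omega \<beta> * (snd p i) powr \<beta>)))"

definition choquet :: "nat \<Rightarrow> real \<Rightarrow> (nat \<Rightarrow> real) set \<Rightarrow> ((nat \<Rightarrow> real) \<Rightarrow> real) \<Rightarrow> ennreal" where
  "choquet n \<beta> \<Omega> h = (\<integral>\<^sup>+ t. indicator {0..} t * hcontent n \<beta> {x \<in> \<Omega>. h x > t} \<partial>lborel)"

definition cubeN :: "nat \<Rightarrow> (nat \<Rightarrow> real) \<Rightarrow> real \<Rightarrow> (nat \<Rightarrow> real) set" where
  "cubeN n a l = {x \<in> Rn n. \<forall>i<n. a i \<le> x i \<and> x i \<le> a i + l}"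

definition bmo :: "nat \<Rightarrow> real \<Rightarrow> ((nat \<Rightarrow> real) \<Rightarrow> real) \<Rightarrow> ennreal" where
  "bmo n \<beta> f = (SUP q \<in> {(a, l). a \<in> Rn n \<and> 0 < l}.
      (INF c :: real. ennreal (snd q powr (-\<beta>)) *
         choquet n \<beta> (cubeN n (fst q) (snd q)) (\<lambda>x. \<bar>f x - c\<bar>)))"

end

theory Submission
  imports Defs
begin

lemma INF_add_const_gen: "(INF i\<in>I. f i + c) = (INF i\<in>I. f i) + (c::ennreal)"
proof (cases "I = {}")
  case True then show ?thesis by simp
next
  case False
  show ?thesis
    using continuous_at_Inf_mono[of "\<lambda>x. x + c" "f`I"] False
    using continuous_add[of "at_right (Inf (f ` I))", of "\<lambda>x. x" "\<lambda>x. c"]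
    by (auto simp: mono_def image_comp)
qed

lemma INF_add_le:
  fixes X :: ennreal
  assumes "\<And>i j. i \<in> I \<Longrightarrow> j \<in> J \<Longrightarrow> X \<le> f i + g j"
  shows "X \<le> (INF i\<in>I. f i) + (INF j\<in>J. g j)"
proof -
  have "X \<le> (INF i\<in>I. f i + (INF j\<in>J. g j))"
  proof (rule INF_greatest)
    fix i assume i: "i \<in> I"
    have "X \<le> (INF j\<in>J. f i + g j)" by (rule INF_greatest) (use assms i in auto)
    also have "\<dots> = f i + (INF j\<in>J. g j)"
      using INF_add_const_gen[where f=g and I=J and c="f i"] by (simp add: add.commute)
    finally show "X \<le> f i + (INF j\<in>J. g j)" .
  qed
  also have "\<dots> = (INF i\<in>I. f i) + (INF j\<in>J. g j)" by (rule INF_add_const_gen)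
  finally show ?thesis .
qed

lemma INF_mult_left_fin:
  fixes k :: real
  assumes "k > 0"
  shows "ennreal k * (INF i\<in>I. f i) = (INF i\<in>I. ennreal k * f i)"
proof (rule antisym)
  show "ennreal k * (INF i\<in>I. f i) \<le> (INF i\<in>I. ennreal k * f i)"
    by (rule INF_greatest) (intro mult_left_mono INF_lower, auto)
  have kk: "ennreal k * ennreal (1/k) = 1" using assms
    by (simp add: ennreal_mult[symmetric])
  have "(INF i\<in>I. ennreal k * f i) = ennreal k * (ennreal (1/k) * (INF i\<in>I. ennreal k * f i))"
    by (simp add: mult.assoc[symmetric] kk)
  also have "ennreal (1/k) * (INF i\<in>I. ennreal k * f i) \<le> (INF i\<in>I. f i)"
  proof (rule INF_greatest)
    fix i assume "i \<in> I"
    then have "ennreal (1/k) * (INF i\<in>I. ennreal k * f i) \<le> ennreal (1/k) * (ennreal k * f i)"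
      by (intro mult_left_mono INF_lower) auto
    also have "\<dots> = f i" by (simp add: mult.assoc[symmetric] kk mult.commute[of "ennreal (1/k)"])
    finally show "ennreal (1/k) * (INF i\<in>I. ennreal k * f i) \<le> f i" .
  qed
  finally show "(INF i\<in>I. ennreal k * f i) \<le> ennreal k * (INF i\<in>I. f i)"
    by (simp add: mult_left_mono)
qed

lemma antimono_borel:
  fixes G :: "real \<Rightarrow> ennreal"
  assumes "\<And>s t. s \<le> t \<Longrightarrow> G t \<le> G s"
  shows "G \<in> borel_measurable borel"
proof (rule borel_measurableI_greater)
  fix y
  have "is_interval {x. y < G x}"
    unfolding is_interval_1
  proof (intro ballI allI impI, clarify)
    fix a b x assume "y < G a" "y < G b" "a \<le> x" "x \<le> b"
    then show "y < G x" using assms[of x b] by (meson less_le_trans)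
  qed
  then show "{x \<in> space borel. y < G x} \<in> sets borel"
    by (simp add: real_interval_borel_measurable)
qed


lemma hcontent_mono:
  assumes "A \<subseteq> B" shows "hcontent n \<beta> A \<le> hcontent n \<beta> B"
  unfolding hcontent_def
  by (rule INF_superset_mono) (use assms in auto)

lemma zero_Rn: "(\<lambda>i. 0) \<in> Rn n" by (simp add: Rn_def)

lemma hcontent_empty: "hcontent n \<beta> {} = 0"
proof -
  have "hcontent n \<beta> {} \<le> 0"
    unfolding hcontent_def by (rule INF_lower2[of "((\<lambda>i. \<lambda>j. 0), (\<lambda>i. 0::real))"]) (auto simp: zero_Rn)
  then show ?thesis by simp
qed

lemma hcontent_Un: "hcontent n \<beta> (A \<union> B) \<le> hcontent n \<beta> A + hcontent n \<beta> B"
proof -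
  let ?S = "\<lambda>E. {(c :: nat \<Rightarrow> nat \<Rightarrow> real, r :: nat \<Rightarrow> real). (\<forall>i. c i \<in> Rn n \<and> 0 \<le> r i) \<and> E \<subseteq> (\<Union>i. ballN n (c i) (r i))}"
  let ?v = "\<lambda>p. (\<Sum>i. ennreal (omega \<beta> * (snd p i) powr \<beta>))"
  have "hcontent n \<beta> (A \<union> B) \<le> (INF p\<in>?S A. ?v p) + (INF p\<in>?S B. ?v p)"
  proof (rule INF_add_le)
    fix p p' assume p: "p \<in> ?S A" and p': "p' \<in> ?S B"
    obtain c r where cr: "p = (c, r)" by (cases p)
    obtain c' r' where cr': "p' = (c', r')" by (cases p')
    define q where "q = ((\<lambda>i. if even i then c (i div 2) else c' (i div 2)),
                        (\<lambda>i. if even i then r (i div 2) else r' (i div 2)))"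
    have "q \<in> ?S (A \<union> B)"
    proof -
      have 1: "\<forall>i. fst q i \<in> Rn n \<and> 0 \<le> snd q i" using p p' cr cr' by (auto simp: q_def)
      have 2: "A \<union> B \<subseteq> (\<Union>i. ballN n (fst q i) (snd q i))"
      proof
        fix x assume "x \<in> A \<union> B"
        then show "x \<in> (\<Union>i. ballN n (fst q i) (snd q i))"
        proof
          assume "x \<in> A"
          then obtain k where "x \<in> ballN n (c k) (r k)" using p cr by auto
          then have "x \<in> ballN n (fst q (2*k)) (snd q (2*k))" by (simp add: q_def)
          then show ?thesis by blast
        next
          assume "x \<in> B"
          then obtain k where "x \<in> ballN n (c' k) (r' k)" using p' cr' by auto
          then have "x \<in> ballN n (fst q (2*k+1)) (snd q (2*k+1))" by (simp add: q_def)
          then show ?thesis by blast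
        qed
      qed
      show ?thesis using 1 2 by (cases q) auto
    qed
    then have "hcontent n \<beta> (A \<union> B) \<le> ?v q"
      unfolding hcontent_def by (rule INF_lower2) auto
    also have "?v q = ?v p + ?v p'"
    proof -
      let ?F = "\<lambda>i. ennreal (omega \<beta> * (snd q i) powr \<beta>)"
      have "(\<lambda>k. sum ?F {k * 2 ..< k * 2 + 2}) sums (suminf ?F)"
        by (rule sums_group) (auto intro: summable_sums)
      moreover have "\<And>k. sum ?F {k * 2 ..< k * 2 + 2} =
          ennreal (omega \<beta> * (r k) powr \<beta>) + ennreal (omega \<beta> * (r' k) powr \<beta>)"
      proof -
        fix k :: nat
        have "{k * 2 ..< k * 2 + 2} = {2*k, 2*k+1}" by auto
        then show "sum ?F {k * 2 ..< k * 2 + 2} =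
          ennreal (omega \<beta> * (r k) powr \<beta>) + ennreal (omega \<beta> * (r' k) powr \<beta>)"
          by (simp add: q_def)
      qed
      ultimately have "suminf ?F = (\<Sum>k. ennreal (omega \<beta> * (r k) powr \<beta>) + ennreal (omega \<beta> * (r' k) powr \<beta>))"
        by (simp add: sums_iff)
      also have "\<dots> = ?v p + ?v p'" using cr cr' by (simp add: suminf_add)
      finally show ?thesis by simp
    qed
    finally show "hcontent n \<beta> (A \<union> B) \<le> ?v p + ?v p'" .
  qed
  then show ?thesis unfolding hcontent_def .
qed


lemma choq_meas: "(\<lambda>t::real. hcontent n \<beta> {x\<in>Q. (h x::real) > t}) \<in> borel_measurable borel"
  by (rule antimono_borel) (auto intro: hcontent_mono)

lemma choq_meas2: "(\<lambda>t::real. indicator {0..} t * hcontent n \<beta> {x\<in>Q. (h x::real) > t} :: ennreal) \<in> borel_measurable borel"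
  using choq_meas[of n \<beta> Q h] by measurable

lemma choquet_mono:
  assumes "\<And>x. x \<in> Q \<Longrightarrow> h1 x \<le> h2 x"
  shows "choquet n \<beta> Q h1 \<le> choquet n \<beta> Q h2"
  unfolding choquet_def
  by (intro nn_integral_mono mult_left_mono hcontent_mono) (use assms in \<open>auto intro: less_le_trans\<close>)

lemma choquet_scale:
  fixes c :: real
  assumes c: "c > 0"
  shows "choquet n \<beta> Q (\<lambda>x. c * h x) = ennreal c * choquet n \<beta> Q h"
proof -
  define F where "F = (\<lambda>t. indicator {0..} t * hcontent n \<beta> {x\<in>Q. h x > t} :: ennreal)"
  have Fm: "F \<in> borel_measurable borel" unfolding F_def by (rule choq_meas2)
  have Fcm: "(\<lambda>t. F (t / c)) \<in> borel_measurable borel"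
    using Fm by measurable
  have eq: "\<And>t. indicator {0..} t * hcontent n \<beta> {x\<in>Q. c * h x > t} = F (t / c)"
  proof -
    fix t :: real
    have "{x\<in>Q. c * h x > t} = {x\<in>Q. h x > t / c}" using c
      by (auto simp: pos_divide_less_eq mult.commute)
    moreover have "(indicator {0..} t :: ennreal) = indicator {0..} (t / c)" using c
      by (auto simp: indicator_def zero_le_divide_iff)
    ultimately show "indicator {0..} t * hcontent n \<beta> {x\<in>Q. c * h x > t} = F (t / c)"
      by (simp add: F_def)
  qed
  have "choquet n \<beta> Q (\<lambda>x. c * h x) = (\<integral>\<^sup>+ t. F (t / c) \<partial>lborel)"
    unfolding choquet_def by (simp add: eq)
  also have "\<dots> = ennreal \<bar>c\<bar> * (\<integral>\<^sup>+ x. F ((0 + c * x) / c) \<partial>lborel)"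
    by (rule nn_integral_real_affine[OF Fcm]) (use c in simp)
  also have "\<dots> = ennreal c * choquet n \<beta> Q h"
    using c by (simp add: choquet_def F_def)
  finally show ?thesis .
qed

lemma choquet_zero: "choquet n \<beta> Q (\<lambda>x. 0) = 0"
proof -
  have "(\<lambda>t::real. indicator {0..} t * hcontent n \<beta> {x\<in>Q. (0::real) > t}) = (\<lambda>t. 0::ennreal)"
    by (auto simp: indicator_def hcontent_empty fun_eq_iff)
  then show ?thesis unfolding choquet_def by simp
qed

lemma choquet_sub:
  assumes "\<And>x. x \<in> Q \<Longrightarrow> h x \<le> h1 x + h2 x"
  shows "choquet n \<beta> Q h \<le> 2 * (choquet n \<beta> Q h1 + choquet n \<beta> Q h2)"
proof -
  have "choquet n \<beta> Q h \<le> (\<integral>\<^sup>+ t. indicator {0..} t * hcontent n \<beta> {x\<in>Q. 2 * h1 x > t}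
        + indicator {0..} t * hcontent n \<beta> {x\<in>Q. 2 * h2 x > t} \<partial>lborel)"
    unfolding choquet_def
  proof (intro nn_integral_mono)
    fix t :: real
    have "{x\<in>Q. h x > t} \<subseteq> {x\<in>Q. 2 * h1 x > t} \<union> {x\<in>Q. 2 * h2 x > t}"
      using assms by force
    then have "hcontent n \<beta> {x\<in>Q. h x > t} \<le> hcontent n \<beta> {x\<in>Q. 2 * h1 x > t} + hcontent n \<beta> {x\<in>Q. 2 * h2 x > t}"
      by (meson hcontent_mono hcontent_Un order_trans)
    then show "indicator {0..} t * hcontent n \<beta> {x\<in>Q. h x > t} \<le> indicator {0..} t * hcontent n \<beta> {x\<in>Q. 2 * h1 x > t}
        + indicator {0..} t * hcontent n \<beta> {x\<in>Q. 2 * h2 x > t}"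
      by (simp add: distrib_left[symmetric] mult_left_mono)
  qed
  also have "\<dots> = choquet n \<beta> Q (\<lambda>x. 2 * h1 x) + choquet n \<beta> Q (\<lambda>x. 2 * h2 x)"
    unfolding choquet_def by (rule nn_integral_add) (auto intro: choq_meas2)
  also have "\<dots> = 2 * (choquet n \<beta> Q h1 + choquet n \<beta> Q h2)"
    by (simp add: choquet_scale[where c=2, simplified] distrib_left)
  finally show ?thesis .
qed


lemma two_min_le:
  fixes X u v :: ennreal
  assumes "X \<le> 2 * u" "X \<le> 2 * v"
  shows "X \<le> u + v"
proof (cases "u \<le> v")
  case True
  then have "2 * u \<le> u + v" by (simp add: mult_2 add_left_mono)
  then show ?thesis using assms(1) by simp
next
  case False
  then have "2 * v \<le> u + v" by (simp add: mult_2 add_right_mono)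
  then show ?thesis using assms(2) by simp
qed

lemma bmo_sub:
  assumes H: "\<And>a l c1 c2. a \<in> Rn n \<Longrightarrow> 0 < l \<Longrightarrow> \<exists>c. choquet n \<beta> (cubeN n a l) (\<lambda>x. \<bar>h x - c\<bar>)
     \<le> 2 * (choquet n \<beta> (cubeN n a l) (\<lambda>x. \<bar>f x - c1\<bar>) + choquet n \<beta> (cubeN n a l) (\<lambda>x. \<bar>g x - c2\<bar>))"
  shows "bmo n \<beta> h \<le> 2 * (bmo n \<beta> f + bmo n \<beta> g)"
  unfolding bmo_def[of n \<beta> h]
proof (rule SUP_least)
  fix q :: "(nat \<Rightarrow> real) \<times> real" assume q: "q \<in> {(a, l). a \<in> Rn n \<and> 0 < l}"
  obtain a l where al: "q = (a, l)" by (cases q)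
  have a: "a \<in> Rn n" and l: "0 < l" using q al by auto
  let ?w = "ennreal (l powr (-\<beta>))"
  let ?Q = "cubeN n a l"
  define A where "A = (\<lambda>c1. ?w * choquet n \<beta> ?Q (\<lambda>x. \<bar>f x - c1\<bar>))"
  define B where "B = (\<lambda>c1. ?w * choquet n \<beta> ?Q (\<lambda>x. \<bar>g x - c1\<bar>))"
  define X where "X = (INF c::real. ?w * choquet n \<beta> ?Q (\<lambda>x. \<bar>h x - c\<bar>))"
  have key: "X \<le> 2 * (A c1 + B c2)" for c1 c2
  proof -
    obtain c where c: "choquet n \<beta> ?Q (\<lambda>x. \<bar>h x - c\<bar>)
     \<le> 2 * (choquet n \<beta> ?Q (\<lambda>x. \<bar>f x - c1\<bar>) + choquet n \<beta> ?Q (\<lambda>x. \<bar>g x - c2\<bar>))"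
      using H[OF a l] by blast
    have "X \<le> ?w * choquet n \<beta> ?Q (\<lambda>x. \<bar>h x - c\<bar>)" unfolding X_def by (rule INF_lower) simp
    also have "\<dots> \<le> ?w * (2 * (choquet n \<beta> ?Q (\<lambda>x. \<bar>f x - c1\<bar>) + choquet n \<beta> ?Q (\<lambda>x. \<bar>g x - c2\<bar>)))"
      by (rule mult_left_mono[OF c]) simp
    also have "\<dots> = 2 * (A c1 + B c2)" by (simp add: A_def B_def algebra_simps)
    finally show ?thesis .
  qed
  let ?S = "(INF p\<in>(UNIV::(real\<times>real) set). A (fst p) + B (snd p))"
  have "X \<le> ?S + ?S"
    by (rule INF_add_le) (rule two_min_le; rule key)
  moreover have "?S \<le> (INF c. A c) + (INF c. B c)"
  proof (rule INF_add_le)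
    fix i j :: real
    show "?S \<le> A i + B j" by (rule INF_lower2[of "(i, j)"]) simp_all
  qed
  ultimately have "X \<le> ((INF c. A c) + (INF c. B c)) + ((INF c. A c) + (INF c. B c))"
    using add_mono order_trans by blast
  then have X2: "X \<le> 2 * ((INF c. A c) + (INF c. B c))" by (simp only: mult_2)
  have "(INF c. A c) \<le> bmo n \<beta> f"
    unfolding bmo_def A_def by (rule SUP_upper2[of q]) (use q al in auto)
  moreover have "(INF c. B c) \<le> bmo n \<beta> g"
    unfolding bmo_def B_def by (rule SUP_upper2[of q]) (use q al in auto)
  ultimately have "2 * ((INF c. A c) + (INF c. B c)) \<le> 2 * (bmo n \<beta> f + bmo n \<beta> g)"
    by (intro mult_left_mono add_mono) simp_all
  with X2 have "X \<le> 2 * (bmo n \<beta> f + bmo n \<beta> g)" by (rule order_trans)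
  then show "(INF c::real. ennreal (snd q powr - \<beta>) * choquet n \<beta> (cubeN n (fst q) (snd q)) (\<lambda>x. \<bar>h x - c\<bar>))
         \<le> 2 * (bmo n \<beta> f + bmo n \<beta> g)"
    unfolding X_def using al by simp
qed


lemma bmo_abs: "bmo n \<beta> (\<lambda>x. \<bar>f x\<bar>) \<le> bmo n \<beta> f"
  unfolding bmo_def
proof (rule SUP_mono)
  fix q :: "(nat \<Rightarrow> real) \<times> real" assume q: "q \<in> {(a, l). a \<in> Rn n \<and> 0 < l}"
  have "(INF c::real. ennreal (snd q powr - \<beta>) * choquet n \<beta> (cubeN n (fst q) (snd q)) (\<lambda>x. \<bar>\<bar>f x\<bar> - c\<bar>))
     \<le> (INF c::real. ennreal (snd q powr - \<beta>) * choquet n \<beta> (cubeN n (fst q) (snd q)) (\<lambda>x. \<bar>f x - c\<bar>))"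
  proof (rule INF_greatest)
    fix c :: real
    show "(INF c::real. ennreal (snd q powr - \<beta>) * choquet n \<beta> (cubeN n (fst q) (snd q)) (\<lambda>x. \<bar>\<bar>f x\<bar> - c\<bar>))
       \<le> ennreal (snd q powr - \<beta>) * choquet n \<beta> (cubeN n (fst q) (snd q)) (\<lambda>x. \<bar>f x - c\<bar>)"
      by (rule INF_lower2[of "\<bar>c\<bar>"]) (auto intro!: mult_left_mono choquet_mono)
  qed
  then show "\<exists>m\<in>{(a, l). a \<in> Rn n \<and> 0 < l}.
       (INF c::real. ennreal (snd q powr - \<beta>) * choquet n \<beta> (cubeN n (fst q) (snd q)) (\<lambda>x. \<bar>\<bar>f x\<bar> - c\<bar>))
     \<le> (INF c::real. ennreal (snd m powr - \<beta>) * choquet n \<beta> (cubeN n (fst m) (snd m)) (\<lambda>x. \<bar>f x - c\<bar>))"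
    using q by blast
qed

lemma bmo_zero: "bmo n \<beta> (\<lambda>x. 0) = 0"
proof -
  have "bmo n \<beta> (\<lambda>x. 0) \<le> 0"
    unfolding bmo_def
    by (rule SUP_least, rule INF_lower2[of 0]) (simp_all add: choquet_zero)
  then show ?thesis by simp
qed

lemma bmo_scale: "bmo n \<beta> (\<lambda>x. lam * f x) = ennreal \<bar>lam\<bar> * bmo n \<beta> f"
proof (cases "lam = 0")
  case True
  then show ?thesis using bmo_zero by simp
next
  case False
  have per: "(INF c::real. ennreal (l powr - \<beta>) * choquet n \<beta> Q (\<lambda>x. \<bar>lam * f x - c\<bar>))
     = ennreal \<bar>lam\<bar> * (INF c::real. ennreal (l powr - \<beta>) * choquet n \<beta> Q (\<lambda>x. \<bar>f x - c\<bar>))" for l Q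
  proof -
    define G where "G = (\<lambda>d. ennreal \<bar>lam\<bar> * (ennreal (l powr - \<beta>) * choquet n \<beta> Q (\<lambda>x. \<bar>f x - d\<bar>)))"
    have eqc: "ennreal (l powr - \<beta>) * choquet n \<beta> Q (\<lambda>x. \<bar>lam * f x - c\<bar>) = G (c / lam)" for c
    proof -
      have "(\<lambda>x. \<bar>lam * f x - c\<bar>) = (\<lambda>x. \<bar>lam\<bar> * \<bar>f x - c / lam\<bar>)"
        using False by (auto simp: fun_eq_iff abs_mult[symmetric] right_diff_distrib)
      then show ?thesis using False
        by (simp add: G_def choquet_scale mult.assoc mult.left_commute)
    qed
    have "(INF c::real. G (c / lam)) = (INF d. G d)"
    proof (rule antisym)
      show "(INF c::real. G (c / lam)) \<le> (INF d. G d)"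
      proof (rule INF_greatest)
        fix d :: real
        show "(INF c::real. G (c / lam)) \<le> G d"
          by (rule INF_lower2[of "d * lam"]) (use False in simp_all)
      qed
      show "(INF d. G d) \<le> (INF c::real. G (c / lam))"
        by (rule INF_greatest, rule INF_lower) simp
    qed
    then show ?thesis
      using False by (simp add: eqc G_def INF_mult_left_fin)
  qed
  show ?thesis
    unfolding bmo_def by (simp add: per SUP_mult_left_ennreal)
qed

theorem lemma2p10:
  fixes \<beta> :: real
  assumes "0 < \<beta>"
  shows "\<exists>C>0. \<forall>(n::nat) f g. \<beta> \<le> real n \<longrightarrow>
     bmo n \<beta> (\<lambda>x. f x + g x) \<le> 2 * (bmo n \<beta> f + bmo n \<beta> g)
   \<and> (\<forall>lam::real. bmo n \<beta> (\<lambda>x. lam * f x) = ennreal \<bar>lam\<bar> * bmo n \<beta> f)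
   \<and> bmo n \<beta> (\<lambda>x. \<bar>f x\<bar>) \<le> ennreal C * bmo n \<beta> f
   \<and> bmo n \<beta> (\<lambda>x. max (f x) (g x)) \<le> ennreal C * (bmo n \<beta> f + bmo n \<beta> g)
   \<and> bmo n \<beta> (\<lambda>x. min (f x) (g x)) \<le> ennreal C * (bmo n \<beta> f + bmo n \<beta> g)"
proof (rule exI[of _ 2], intro conjI allI impI)
  fix n :: nat and f g :: "(nat \<Rightarrow> real) \<Rightarrow> real"
  show "bmo n \<beta> (\<lambda>x. f x + g x) \<le> 2 * (bmo n \<beta> f + bmo n \<beta> g)"
  proof (rule bmo_sub)
    fix a l c1 c2
    show "\<exists>c. choquet n \<beta> (cubeN n a l) (\<lambda>x. \<bar>f x + g x - c\<bar>)
     \<le> 2 * (choquet n \<beta> (cubeN n a l) (\<lambda>x. \<bar>f x - c1\<bar>) + choquet n \<beta> (cubeN n a l) (\<lambda>x. \<bar>g x - c2\<bar>))"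
      by (rule exI[of _ "c1 + c2"], rule choquet_sub) linarith
  qed
  show "bmo n \<beta> (\<lambda>x. max (f x) (g x)) \<le> ennreal 2 * (bmo n \<beta> f + bmo n \<beta> g)"
    unfolding ennreal_numeral
  proof (rule bmo_sub)
    fix a l c1 c2
    show "\<exists>c. choquet n \<beta> (cubeN n a l) (\<lambda>x. \<bar>max (f x) (g x) - c\<bar>)
     \<le> 2 * (choquet n \<beta> (cubeN n a l) (\<lambda>x. \<bar>f x - c1\<bar>) + choquet n \<beta> (cubeN n a l) (\<lambda>x. \<bar>g x - c2\<bar>))"
      by (rule exI[of _ "max c1 c2"], rule choquet_sub) linarith
  qed
  show "bmo n \<beta> (\<lambda>x. min (f x) (g x)) \<le> ennreal 2 * (bmo n \<beta> f + bmo n \<beta> g)"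
    unfolding ennreal_numeral
  proof (rule bmo_sub)
    fix a l c1 c2
    show "\<exists>c. choquet n \<beta> (cubeN n a l) (\<lambda>x. \<bar>min (f x) (g x) - c\<bar>)
     \<le> 2 * (choquet n \<beta> (cubeN n a l) (\<lambda>x. \<bar>f x - c1\<bar>) + choquet n \<beta> (cubeN n a l) (\<lambda>x. \<bar>g x - c2\<bar>))"
      by (rule exI[of _ "min c1 c2"], rule choquet_sub) linarith
  qed
  fix lam :: real
  show "bmo n \<beta> (\<lambda>x. lam * f x) = ennreal \<bar>lam\<bar> * bmo n \<beta> f" by (rule bmo_scale)
next
  fix n :: nat and f :: "(nat \<Rightarrow> real) \<Rightarrow> real"
  have "bmo n \<beta> f \<le> 2 * bmo n \<beta> f" by (simp add: mult_2 add_increasing)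
  then show "bmo n \<beta> (\<lambda>x. \<bar>f x\<bar>) \<le> ennreal 2 * bmo n \<beta> f"
    using bmo_abs[of n \<beta> f] by simp
qed simp

end
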